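(* Let $\widehat{\Gamma}$ be a Harnack graph with controlled, uniformly lazy weights $(\pi,\mu)$. Let $K$ be a set of vertices of $\widehat{\Gamma}$ and $\Gamma:=\widehat{\Gamma}\setminus K$ (so $\partial\Gamma\subseteq K$). For $x\in\widehat{\Gamma}$ and $r>0$ set $B_{\partial\Gamma}(x,r)=B_{\widehat\Gamma}(x,r)\cap\partial\Gamma$, $V_{\partial\Gamma}(x,r)=\pi(B_{\partial\Gamma}(x,r))$, and for $x\in\Gamma$ set \[W(x,r):=\frac{V_{\widehat\Gamma}(x,r)}{V_{\partial\Gamma}(x,r)}.\] Then there is a constant $C$ such that, with $d_x:=d(x,K)$, \[\psi_K(x)\le \sum_{n\ge d_x^2}\frac{C}{W(x,\sqrt n)}\qquad\text{for all } x\in\Gamma\setminus\partial_I\Gamma.\]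
   Context: $\widehat{\Gamma}=(\widehat V,\widehat E)$ is an infinite simple connected graph with symmetric edge weights $\mu_{xy}=\mu_{yx}$, $\mu_{xy}\ne0$ iff $x\sim y$, vertex weights $\pi>0$ with $\sum_{y\sim x}\mu_{xy}\le\pi(x)$; Markov kernel $\mathcal{K}(x,y)=\mu_{xy}/\pi(x)$ ($x\neq y$), $\mathcal{K}(x,x)=1-\sum_{z\sim x}\mu_{xz}/\pi(x)$. Controlled weights: $\exists C_c>1$ with $\mu_{xy}/\pi(x)\ge1/C_c$ for all $y\sim x$. Uniformly lazy: $\exists C_e\in(0,1)$ with $\mathcal{K}(x,x)\ge C_e$ for all $x$. $d$ is the graph distance of $\widehat\Gamma$, $B_{\widehat\Gamma}(x,r)=\{y:d(x,y)\le r\}$, $V_{\widehat\Gamma}(x,r)=\pi(B_{\widehat\Gamma}(x,r))$. The heat kernel is $p(n,x,y)=\mathcal{K}^n(x,y)/\pi(y)$. $\widehat\Gamma$ is a Harnack graph if there are constants $c_1,c_2,c_3,c_4>0$ with $\frac{c_1}{V(x,\sqrt n)}e^{-d(x,y)^2/(c_2n)}\le p(n,x,y)\le\frac{c_3}{V(x,\sqrt n)}e^{-d(x,y)^2/(c_4 n)}$ for all $x,y$ and $n\ge d(x,y)$ (equivalently, volume doubling plus a Poincaré inequality). $\Gamma$ is the subgraph induced on $\widehat V\setminus K$; $\partial\Gamma$ is the set of vertices outside $\Gamma$ adjacent to $\Gamma$, and $\partial_I\Gamma$ the set of vertices of $\Gamma$ adjacent to a vertex outside $\Gamma$. $\psi_K(x)=\mathbb{P}^x(\tau_K<\infty)$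 where $\tau_K=\min\{n\ge0:X_n\in K\}$ for the random walk $(X_n)$ driven by $\mathcal{K}$. When $V_{\partial\Gamma}(x,r)=0$, $1/W(x,r)=0$. *)

theory Defs
  imports "HOL-Analysis.Analysis"
begin

definition adj :: "('a \<Rightarrow> 'a \<Rightarrow> real) \<Rightarrow> 'a \<Rightarrow> 'a \<Rightarrow> bool" where
  "adj \<mu> x y \<longleftrightarrow> x \<noteq> y \<and> \<mu> x y \<noteq> 0"

definition nbrs :: "('a \<Rightarrow> 'a \<Rightarrow> real) \<Rightarrow> 'a \<Rightarrow> 'a set" where
  "nbrs \<mu> x = {y. adj \<mu> x y}"

definition adjrel :: "('a \<Rightarrow> 'a \<Rightarrow> real) \<Rightarrow> ('a \<times> 'a) set" where
  "adjrel \<mu> = {(x, y). adj \<mu> x y}"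

text \<open>Infinite simple connected graph with symmetric edge weights and positive vertex weights,
  with sum over neighbours of mu x y at most pi x (stated for every finite set of neighbours,
  which does not presuppose local finiteness).\<close>
definition weighted_graph :: "('a \<Rightarrow> 'a \<Rightarrow> real) \<Rightarrow> ('a \<Rightarrow> real) \<Rightarrow> bool" where
  "weighted_graph \<mu> \<pi> \<longleftrightarrow>
     infinite (UNIV :: 'a set) \<and>
     (\<forall>x y. \<mu> x y = \<mu> y x) \<and>
     (\<forall>x. \<mu> x x = 0) \<and>
     (\<forall>x. \<pi> x > 0) \<and>
     (\<forall>x F. finite F \<longrightarrow> F \<subseteq> nbrs \<mu> x \<longrightarrow> (\<Sum>y\<in>F. \<mu> x y) \<le> \<pi> x) \<and>
     (\<forall>x y. (x, y) \<in> (adjrel \<mu>)\<^sup>*)"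

definition kernel :: "('a \<Rightarrow> 'a \<Rightarrow> real) \<Rightarrow> ('a \<Rightarrow> real) \<Rightarrow> 'a \<Rightarrow> 'a \<Rightarrow> real" where
  "kernel \<mu> \<pi> x y =
     (if x = y then 1 - (\<Sum>z\<in>nbrs \<mu> x. \<mu> x z) / \<pi> x else \<mu> x y / \<pi> x)"

primrec kpow :: "('a \<Rightarrow> 'a \<Rightarrow> real) \<Rightarrow> ('a \<Rightarrow> real) \<Rightarrow> nat \<Rightarrow> 'a \<Rightarrow> 'a \<Rightarrow> real" where
  "kpow \<mu> \<pi> 0 x y = (if x = y then 1 else 0)"
| "kpow \<mu> \<pi> (Suc n) x y = (\<Sum>z\<in>insert x (nbrs \<mu> x). kernel \<mu> \<pi> x z * kpow \<mu> \<pi> n z y)"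

definition heat_kernel :: "('a \<Rightarrow> 'a \<Rightarrow> real) \<Rightarrow> ('a \<Rightarrow> real) \<Rightarrow> nat \<Rightarrow> 'a \<Rightarrow> 'a \<Rightarrow> real" where
  "heat_kernel \<mu> \<pi> n x y = kpow \<mu> \<pi> n x y / \<pi> y"

definition gdist :: "('a \<Rightarrow> 'a \<Rightarrow> real) \<Rightarrow> 'a \<Rightarrow> 'a \<Rightarrow> nat" where
  "gdist \<mu> x y = (LEAST n. (x, y) \<in> adjrel \<mu> ^^ n)"

definition gball :: "('a \<Rightarrow> 'a \<Rightarrow> real) \<Rightarrow> 'a \<Rightarrow> real \<Rightarrow> 'a set" where
  "gball \<mu> x r = {y. real (gdist \<mu> x y) \<le> r}"

definition vol :: "('a \<Rightarrow> 'a \<Rightarrow> real) \<Rightarrow> ('a \<Rightarrow> real) \<Rightarrow> 'a \<Rightarrow> real \<Rightarrow> real" where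
  "vol \<mu> \<pi> x r = (\<Sum>y\<in>gball \<mu> x r. \<pi> y)"

definition harnack :: "('a \<Rightarrow> 'a \<Rightarrow> real) \<Rightarrow> ('a \<Rightarrow> real) \<Rightarrow> bool" where
  "harnack \<mu> \<pi> \<longleftrightarrow> (\<exists>c1 c2 c3 c4. c1 > 0 \<and> c2 > 0 \<and> c3 > 0 \<and> c4 > 0 \<and>
     (\<forall>x y n. gdist \<mu> x y \<le> n \<longrightarrow>
        c1 / vol \<mu> \<pi> x (sqrt (real n)) * exp (- (real (gdist \<mu> x y))\<^sup>2 / (c2 * real n))
          \<le> heat_kernel \<mu> \<pi> n x y \<and>
        heat_kernel \<mu> \<pi> n x y
          \<le> c3 / vol \<mu> \<pi> x (sqrt (real n)) * exp (- (real (gdist \<mu> x y))\<^sup>2 / (c4 * real n))))"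

definition controlled :: "('a \<Rightarrow> 'a \<Rightarrow> real) \<Rightarrow> ('a \<Rightarrow> real) \<Rightarrow> bool" where
  "controlled \<mu> \<pi> \<longleftrightarrow> (\<exists>Cc > 1. \<forall>x y. adj \<mu> x y \<longrightarrow> \<mu> x y / \<pi> x \<ge> 1 / Cc)"

definition uniformly_lazy :: "('a \<Rightarrow> 'a \<Rightarrow> real) \<Rightarrow> ('a \<Rightarrow> real) \<Rightarrow> bool" where
  "uniformly_lazy \<mu> \<pi> \<longleftrightarrow> (\<exists>Ce. 0 < Ce \<and> Ce < 1 \<and> (\<forall>x. kernel \<mu> \<pi> x x \<ge> Ce))"

text \<open>Gamma = UNIV - K. Outer boundary: vertices outside Gamma adjacent to Gamma.
  Inner boundary: vertices of Gamma adjacent to a vertex outside Gamma.\<close>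
definition outer_boundary :: "('a \<Rightarrow> 'a \<Rightarrow> real) \<Rightarrow> 'a set \<Rightarrow> 'a set" where
  "outer_boundary \<mu> K = {v. v \<in> K \<and> (\<exists>u. u \<notin> K \<and> adj \<mu> u v)}"

definition inner_boundary :: "('a \<Rightarrow> 'a \<Rightarrow> real) \<Rightarrow> 'a set \<Rightarrow> 'a set" where
  "inner_boundary \<mu> K = {u. u \<notin> K \<and> (\<exists>v. v \<in> K \<and> adj \<mu> u v)}"

definition bvol :: "('a \<Rightarrow> 'a \<Rightarrow> real) \<Rightarrow> ('a \<Rightarrow> real) \<Rightarrow> 'a set \<Rightarrow> 'a \<Rightarrow> real \<Rightarrow> real" where
  "bvol \<mu> \<pi> K x r = (\<Sum>y\<in>gball \<mu> x r \<inter> outer_boundary \<mu> K. \<pi> y)"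

text \<open>hit_within n x = P^x(tau_K \<le> n) for the walk driven by the kernel (Markov property recursion).\<close>
primrec hit_within :: "('a \<Rightarrow> 'a \<Rightarrow> real) \<Rightarrow> ('a \<Rightarrow> real) \<Rightarrow> 'a set \<Rightarrow> nat \<Rightarrow> 'a \<Rightarrow> real" where
  "hit_within \<mu> \<pi> K 0 x = (if x \<in> K then 1 else 0)"
| "hit_within \<mu> \<pi> K (Suc n) x =
     (if x \<in> K then 1 else (\<Sum>y\<in>insert x (nbrs \<mu> x). kernel \<mu> \<pi> x y * hit_within \<mu> \<pi> K n y))"

text \<open>psi_K(x) = P^x(tau_K < infinity) = sup_n P^x(tau_K \<le> n).\<close>
definition hitting_prob :: "('a \<Rightarrow> 'a \<Rightarrow> real) \<Rightarrow> ('a \<Rightarrow> real) \<Rightarrow> 'a set \<Rightarrow> 'a \<Rightarrow> real" where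
  "hitting_prob \<mu> \<pi> K x = (SUP n. hit_within \<mu> \<pi> K n x)"

definition set_dist :: "('a \<Rightarrow> 'a \<Rightarrow> real) \<Rightarrow> 'a \<Rightarrow> 'a set \<Rightarrow> nat" where
  "set_dist \<mu> x K = (INF k\<in>K. gdist \<mu> x k)"

end

theory Submission imports Defs begin

locale wg =
  fixes \<mu> :: "'a \<Rightarrow> 'a \<Rightarrow> real" and \<pi> :: "'a \<Rightarrow> real"
  assumes wg: "weighted_graph \<mu> \<pi>" and ctl: "controlled \<mu> \<pi>" and lz: "uniformly_lazy \<mu> \<pi>"
begin

lemma pi_pos: "\<pi> x > 0" using wg unfolding weighted_graph_def by auto

lemma nbrs_finite: "finite (nbrs \<mu> x)"
proof (rule ccontr)
  assume inf: "infinite (nbrs \<mu> x)"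
  obtain Cc where Cc: "Cc > 1" "\<forall>x y. adj \<mu> x y \<longrightarrow> \<mu> x y / \<pi> x \<ge> 1/Cc"
    using ctl unfolding controlled_def by auto
  obtain N :: nat where N: "real N > Cc" using reals_Archimedean2 by auto
  obtain F where F: "F \<subseteq> nbrs \<mu> x" "finite F" "card F = N"
    using infinite_arbitrarily_large[OF inf] by blast
  have "\<forall>x F. finite F \<longrightarrow> F \<subseteq> nbrs \<mu> x \<longrightarrow> (\<Sum>y\<in>F. \<mu> x y) \<le> \<pi> x"
    using wg unfolding weighted_graph_def by blast
  then have "(\<Sum>y\<in>F. \<mu> x y) \<le> \<pi> x" using F by blast
  moreover have "(\<Sum>y\<in>F. \<mu> x y) \<ge> (\<Sum>y\<in>F. \<pi> x / Cc)"
  proof (rule sum_mono)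
    fix y assume "y \<in> F" then have "adj \<mu> x y" using F unfolding nbrs_def by auto
    then have "\<mu> x y / \<pi> x \<ge> 1/Cc" using Cc by auto
    then show "\<pi> x / Cc \<le> \<mu> x y" using pi_pos[of x] Cc by (simp add: field_simps)
  qed
  ultimately have "real N * (\<pi> x / Cc) \<le> \<pi> x" using F by simp
  then have "real N * \<pi> x \<le> Cc * \<pi> x" using Cc by (simp add: field_simps)
  then have "real N \<le> Cc" using pi_pos[of x] by simp
  with N show False by simp
qed

lemma conn: "\<exists>n. (x,y) \<in> adjrel \<mu> ^^ n"
proof -
  have "\<forall>x y. (x,y) \<in> (adjrel \<mu>)\<^sup>*" using wg by (simp add: weighted_graph_def)
  then show ?thesis by (simp add: rtrancl_power)
qed

lemma gdist_path: "(x,y) \<in> adjrel \<mu> ^^ gdist \<mu> x y"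
  unfolding gdist_def by (rule LeastI_ex[OF conn])

lemma gdist_le: "(x,y) \<in> adjrel \<mu> ^^ n \<Longrightarrow> gdist \<mu> x y \<le> n"
  unfolding gdist_def by (rule Least_le)

lemma gdist_refl: "gdist \<mu> x x = 0"
  using gdist_le[of x x 0] by simp

lemma gdist_step: "adj \<mu> y w \<Longrightarrow> gdist \<mu> y z \<le> Suc (gdist \<mu> w z)"
proof -
  assume "adj \<mu> y w"
  then have "(y,w) \<in> adjrel \<mu>" by (simp add: adjrel_def)
  from relpow_Suc_I2[OF this gdist_path] show ?thesis by (rule gdist_le)
qed

lemma gdist_zero: "gdist \<mu> x y = 0 \<Longrightarrow> x = y"
  using gdist_path[of x y] by simp

lemma gdist_one: "gdist \<mu> x y = 1 \<Longrightarrow> adj \<mu> x y"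
  using gdist_path[of x y] by (simp add: adjrel_def)

lemma reach_finite: "finite {y. (x,y) \<in> adjrel \<mu> ^^ k}"
proof (induction k)
  case 0 show ?case by simp
next
  case (Suc k)
  have "{y. (x,y) \<in> adjrel \<mu> ^^ Suc k} \<subseteq> (\<Union>w\<in>{y. (x,y) \<in> adjrel \<mu> ^^ k}. nbrs \<mu> w)"
    by (auto simp: adjrel_def nbrs_def)
  then show ?case using Suc nbrs_finite by (meson finite_UN_I finite_subset)
qed

lemma gball_finite: "finite (gball \<mu> x r)"
proof -
  have "gball \<mu> x r \<subseteq> (\<Union>k\<in>{..nat \<lfloor>r\<rfloor>}. {y. (x,y) \<in> adjrel \<mu> ^^ k})"
  proof
    fix y assume "y \<in> gball \<mu> x r"
    then have "real (gdist \<mu> x y) \<le> r" by (simp add: gball_def)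
    then have "gdist \<mu> x y \<le> nat \<lfloor>r\<rfloor>"
      by (simp add: le_nat_iff le_floor_iff)
    then show "y \<in> (\<Union>k\<in>{..nat \<lfloor>r\<rfloor>}. {y. (x,y) \<in> adjrel \<mu> ^^ k})"
      using gdist_path[of x y] by auto
  qed
  then show ?thesis using reach_finite by (meson finite_UN_I finite_atMost finite_subset)
qed

lemma kernel_nonneg: "z \<in> insert x (nbrs \<mu> x) \<Longrightarrow> kernel \<mu> \<pi> x z \<ge> 0"
proof -
  assume z: "z \<in> insert x (nbrs \<mu> x)"
  obtain Cc where Cc: "Cc > 1" "\<forall>x y. adj \<mu> x y \<longrightarrow> \<mu> x y / \<pi> x \<ge> 1/Cc"
    using ctl unfolding controlled_def by auto
  obtain Ce where Ce: "0 < Ce" "\<forall>x. kernel \<mu> \<pi> x x \<ge> Ce" using lz unfolding uniformly_lazy_def by auto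
  show ?thesis
  proof (cases "z = x")
    case True then show ?thesis using Ce(1) Ce(2)[rule_format, of x] by simp
  next
    case False
    then have "adj \<mu> x z" using z by (simp add: nbrs_def)
    then have "\<mu> x z / \<pi> x \<ge> 1/Cc" using Cc by auto
    moreover have "1/Cc > 0" using Cc by simp
    ultimately have "\<mu> x z / \<pi> x \<ge> 0" by linarith
    then show ?thesis using False by (simp add: kernel_def)
  qed
qed

lemma kernel_sum: "(\<Sum>z\<in>insert x (nbrs \<mu> x). kernel \<mu> \<pi> x z) = 1"
proof -
  have xn: "x \<notin> nbrs \<mu> x" by (simp add: nbrs_def adj_def)
  have "(\<Sum>z\<in>nbrs \<mu> x. kernel \<mu> \<pi> x z) = (\<Sum>z\<in>nbrs \<mu> x. \<mu> x z / \<pi> x)"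
    by (rule sum.cong) (auto simp: kernel_def nbrs_def adj_def)
  also have "\<dots> = (\<Sum>z\<in>nbrs \<mu> x. \<mu> x z) / \<pi> x" by (simp add: sum_divide_distrib)
  finally show ?thesis using xn nbrs_finite[of x] by (simp add: kernel_def)
qed

lemma kpow_nonneg: "kpow \<mu> \<pi> n x y \<ge> 0"
proof (induction n arbitrary: x)
  case 0 show ?case by simp
next
  case (Suc n) show ?case
    unfolding kpow.simps by (rule sum_nonneg, rule mult_nonneg_nonneg, erule kernel_nonneg, rule Suc.IH)
qed

lemma kpow_supp: "kpow \<mu> \<pi> m y z \<noteq> 0 \<Longrightarrow> gdist \<mu> y z \<le> m"
proof (induction m arbitrary: y)
  case 0 then show ?case by (cases "y = z") (simp_all add: gdist_refl)
next
  case (Suc m)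
  then obtain w where w: "w \<in> insert y (nbrs \<mu> y)" "kernel \<mu> \<pi> y w * kpow \<mu> \<pi> m w z \<noteq> 0"
  proof -
    have ne: "(\<Sum>w\<in>insert y (nbrs \<mu> y). kernel \<mu> \<pi> y w * kpow \<mu> \<pi> m w z) \<noteq> 0" using Suc.prems by simp
    have "\<exists>w\<in>insert y (nbrs \<mu> y). kernel \<mu> \<pi> y w * kpow \<mu> \<pi> m w z \<noteq> 0"
    proof (rule ccontr)
      assume "\<not> ?thesis"
      then have "(\<Sum>w\<in>insert y (nbrs \<mu> y). kernel \<mu> \<pi> y w * kpow \<mu> \<pi> m w z) = 0"
        by (intro sum.neutral) blast
      with ne show False by simp
    qed
    then show ?thesis using that by blast
  qed
  then have "gdist \<mu> w z \<le> m" using Suc.IH by simp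
  then show ?case using w(1) gdist_step[of y w z] by (auto simp: nbrs_def)
qed

lemma kpow_sum_le: "finite A \<Longrightarrow> (\<Sum>y\<in>A. kpow \<mu> \<pi> n x y) \<le> 1"
proof (induction n arbitrary: x)
  case 0
  have "(\<Sum>y\<in>A. kpow \<mu> \<pi> 0 x y) = (\<Sum>y\<in>A. if x = y then 1 else 0)" by simp
  also have "\<dots> = (if x \<in> A then 1 else 0)" using 0 by (simp add: sum.delta)
  finally show ?case by simp
next
  case (Suc n)
  have "(\<Sum>y\<in>A. kpow \<mu> \<pi> (Suc n) x y)
      = (\<Sum>z\<in>insert x (nbrs \<mu> x). kernel \<mu> \<pi> x z * (\<Sum>y\<in>A. kpow \<mu> \<pi> n z y))"
    by (simp add: sum_distrib_left) (rule sum.swap)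
  also have "\<dots> \<le> (\<Sum>z\<in>insert x (nbrs \<mu> x). kernel \<mu> \<pi> x z * 1)"
    by (rule sum_mono, rule mult_left_mono) (auto simp: Suc kernel_nonneg)
  also have "\<dots> = 1" using kernel_sum by simp
  finally show ?case .
qed


definition Gm :: "'a set \<Rightarrow> nat \<Rightarrow> 'a \<Rightarrow> real" where
  "Gm K m y = (\<Sum>z\<in>outer_boundary \<mu> K \<inter> gball \<mu> y (real m). kpow \<mu> \<pi> m y z)"

lemma Gm_nonneg: "Gm K m y \<ge> 0"
  unfolding Gm_def by (intro sum_nonneg kpow_nonneg)

lemma Gm_bdry: "y \<in> outer_boundary \<mu> K \<Longrightarrow> Gm K 0 y = 1"
proof -
  assume y: "y \<in> outer_boundary \<mu> K"
  have fin: "finite (outer_boundary \<mu> K \<inter> gball \<mu> y 0)" using gball_finite by blast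
  have yin: "y \<in> outer_boundary \<mu> K \<inter> gball \<mu> y 0" using y by (simp add: gball_def gdist_refl)
  have "Gm K 0 y = (\<Sum>z\<in>outer_boundary \<mu> K \<inter> gball \<mu> y 0. if y = z then 1 else 0)"
    by (simp add: Gm_def)
  also have "\<dots> = 1" using fin yin by (simp add: sum.delta)
  finally show ?thesis .
qed

lemma Gm_step: "(\<Sum>w\<in>insert y (nbrs \<mu> y). kernel \<mu> \<pi> y w * Gm K m w) = Gm K (Suc m) y"
proof -
  let ?S = "outer_boundary \<mu> K"
  let ?T = "?S \<inter> gball \<mu> y (real (Suc m))"
  have eq: "Gm K m w = (\<Sum>z\<in>?T. kpow \<mu> \<pi> m w z)" if w: "w \<in> insert y (nbrs \<mu> y)" for w
    unfolding Gm_def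
  proof (rule sum.mono_neutral_left)
    show "finite ?T" using gball_finite by blast
    show "?S \<inter> gball \<mu> w (real m) \<subseteq> ?T"
    proof
      fix z assume z: "z \<in> ?S \<inter> gball \<mu> w (real m)"
      then have "gdist \<mu> w z \<le> m" by (simp add: gball_def)
      moreover have "gdist \<mu> y z \<le> Suc (gdist \<mu> w z)"
      proof (cases "w = y")
        case True then show ?thesis by simp
      next
        case False then have "adj \<mu> y w" using w by (simp add: nbrs_def)
        then show ?thesis by (rule gdist_step)
      qed
      ultimately have "gdist \<mu> y z \<le> Suc m" by simp
      then show "z \<in> ?T" using z by (simp add: gball_def)
    qed
    show "\<forall>z\<in>?T - ?S \<inter> gball \<mu> w (real m). kpow \<mu> \<pi> m w z = 0"
    proof
      fix z assume "z \<in> ?T - ?S \<inter> gball \<mu> w (real m)"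
      then have "\<not> gdist \<mu> w z \<le> m" by (simp add: gball_def)
      then show "kpow \<mu> \<pi> m w z = 0" using kpow_supp by blast
    qed
  qed
  have "(\<Sum>w\<in>insert y (nbrs \<mu> y). kernel \<mu> \<pi> y w * Gm K m w)
      = (\<Sum>w\<in>insert y (nbrs \<mu> y). kernel \<mu> \<pi> y w * (\<Sum>z\<in>?T. kpow \<mu> \<pi> m w z))"
    by (rule sum.cong) (simp_all add: eq)
  also have "\<dots> = (\<Sum>w\<in>insert y (nbrs \<mu> y). \<Sum>z\<in>?T. kernel \<mu> \<pi> y w * kpow \<mu> \<pi> m w z)"
    by (simp add: sum_distrib_left)
  also have "\<dots> = (\<Sum>z\<in>?T. \<Sum>w\<in>insert y (nbrs \<mu> y). kernel \<mu> \<pi> y w * kpow \<mu> \<pi> m w z)"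
    by (rule sum.swap)
  also have "\<dots> = Gm K (Suc m) y" by (simp add: Gm_def)
  finally show ?thesis .
qed

lemma hit_le: "y \<notin> K \<or> y \<in> outer_boundary \<mu> K \<Longrightarrow> hit_within \<mu> \<pi> K n y \<le> (\<Sum>m\<le>n. Gm K m y)"
proof (induction n arbitrary: y)
  case 0
  show ?case
  proof (cases "y \<in> K")
    case True
    then have "y \<in> outer_boundary \<mu> K" using 0 by blast
    then show ?thesis using True by (simp add: Gm_bdry)
  next
    case False then show ?thesis by (simp add: Gm_nonneg)
  qed
next
  case (Suc n)
  show ?case
  proof (cases "y \<in> K")
    case True
    then have "y \<in> outer_boundary \<mu> K" using Suc.prems by blast
    then have "Gm K 0 y = 1" by (rule Gm_bdry)
    moreover have "Gm K 0 y \<le> (\<Sum>m\<le>Suc n. Gm K m y)"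
      by (rule member_le_sum) (simp_all add: Gm_nonneg)
    ultimately show ?thesis using True by simp
  next
    case False
    have "hit_within \<mu> \<pi> K (Suc n) y
        = (\<Sum>w\<in>insert y (nbrs \<mu> y). kernel \<mu> \<pi> y w * hit_within \<mu> \<pi> K n w)"
      using False by simp
    also have "\<dots> \<le> (\<Sum>w\<in>insert y (nbrs \<mu> y). kernel \<mu> \<pi> y w * (\<Sum>m\<le>n. Gm K m w))"
    proof (rule sum_mono, rule mult_left_mono)
      fix w assume w: "w \<in> insert y (nbrs \<mu> y)"
      show "kernel \<mu> \<pi> y w \<ge> 0" using w by (rule kernel_nonneg)
      have "w \<notin> K \<or> w \<in> outer_boundary \<mu> K"
      proof (cases "w = y")
        case True then show ?thesis using False by simp
      next
        case wy: False
        then have "adj \<mu> y w" using w by (simp add: nbrs_def)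
        then show ?thesis using False unfolding outer_boundary_def by blast
      qed
      then show "hit_within \<mu> \<pi> K n w \<le> (\<Sum>m\<le>n. Gm K m w)" by (rule Suc.IH)
    qed
    also have "\<dots> = (\<Sum>m\<le>n. \<Sum>w\<in>insert y (nbrs \<mu> y). kernel \<mu> \<pi> y w * Gm K m w)"
      by (simp add: sum_distrib_left sum.swap[of _ "insert y (nbrs \<mu> y)"])
    also have "\<dots> = (\<Sum>m\<le>n. Gm K (Suc m) y)" by (simp add: Gm_step)
    also have "\<dots> \<le> Gm K 0 y + (\<Sum>m\<le>n. Gm K (Suc m) y)" by (simp add: Gm_nonneg)
    also have "\<dots> = (\<Sum>m\<le>Suc n. Gm K m y)" by (rule sum.atMost_Suc_shift[symmetric])
    finally show ?thesis .
  qed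
qed

lemma vol_pos: "0 \<le> r \<Longrightarrow> vol \<mu> \<pi> x r > 0"
proof -
  assume r: "0 \<le> r"
  have "x \<in> gball \<mu> x r" using r by (simp add: gball_def gdist_refl)
  then have "\<pi> x \<le> vol \<mu> \<pi> x r" unfolding vol_def
    by (intro member_le_sum) (simp_all add: gball_finite less_imp_le pi_pos)
  then show ?thesis using pi_pos[of x] by linarith
qed

lemma vol_mono: assumes "r \<le> s" shows "vol \<mu> \<pi> x r \<le> vol \<mu> \<pi> x s"
  unfolding vol_def
proof (rule sum_mono2)
  show "finite (gball \<mu> x s)" by (rule gball_finite)
  show "gball \<mu> x r \<subseteq> gball \<mu> x s" using assms by (auto simp: gball_def)
  show "0 \<le> \<pi> b" if "b \<in> gball \<mu> x s - gball \<mu> x r" for b using pi_pos less_imp_le by blast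
qed



lemma doubling:
  assumes c1: "c1 > 0" and c2: "c2 > 0"
    and H: "\<And>y n. gdist \<mu> x y \<le> n \<Longrightarrow> c1 / vol \<mu> \<pi> x (sqrt (real n)) * exp (- (real (gdist \<mu> x y))\<^sup>2 / (c2 * real n)) \<le> heat_kernel \<mu> \<pi> n x y"
    and n: "2 \<le> n"
  shows "vol \<mu> \<pi> x (sqrt (real (2*n))) \<le> exp (2/c2) / c1 * vol \<mu> \<pi> x (sqrt (real n))"
proof -
  let ?A = "gball \<mu> x (sqrt (real (2*n)))"
  let ?v = "vol \<mu> \<pi> x (sqrt (real n))"
  have vpos: "?v > 0" by (rule vol_pos) simp
  define a where "a = c1 * exp (-(2/c2)) / ?v"
  have apos: "a > 0" unfolding a_def using c1 vpos by simp
  have npos: "real n > 0" using n by simp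
  have key: "\<pi> y * a \<le> kpow \<mu> \<pi> n x y" if y: "y \<in> ?A" for y
  proof -
    define g where "g = real (gdist \<mu> x y)"
    have g0: "g \<ge> 0" unfolding g_def by simp
    have "g \<le> sqrt (real (2*n))" using y by (simp add: gball_def g_def)
    then have "g\<^sup>2 \<le> (sqrt (real (2*n)))^2" using g0 by (intro power_mono) auto
    then have g2: "g\<^sup>2 \<le> 2 * real n" by simp
    have g3: "gdist \<mu> x y \<le> n"
    proof (rule ccontr)
      assume "\<not> ?thesis"
      then have "real n + 1 \<le> g" unfolding g_def by simp
      then have "(real n + 1)^2 \<le> g\<^sup>2" using n by (intro power_mono) auto
      moreover have "(real n + 1)^2 = real n * real n + 2 * real n + 1" by (simp add: power2_eq_square algebra_simps)
      moreover have "real n * real n \<ge> 0" by simp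
      ultimately show False using g2 by linarith
    qed
    have hk: "c1 / ?v * exp (- g\<^sup>2 / (c2 * real n)) \<le> heat_kernel \<mu> \<pi> n x y"
      using H[OF g3] unfolding g_def .
    have "g\<^sup>2 / (c2 * real n) \<le> (2 * real n) / (c2 * real n)"
      using g2 c2 npos by (intro divide_right_mono) auto
    also have "\<dots> = 2/c2" using npos by simp
    finally have "exp (-(2/c2)) \<le> exp (- g\<^sup>2 / (c2 * real n))" by simp
    then have "c1 / ?v * exp (-(2/c2)) \<le> c1 / ?v * exp (- g\<^sup>2 / (c2 * real n))"
      using c1 vpos by (intro mult_left_mono) auto
    then have "a \<le> heat_kernel \<mu> \<pi> n x y" using hk unfolding a_def by simp
    then show ?thesis using pi_pos[of y] unfolding heat_kernel_def
      by (simp add: pos_le_divide_eq mult.commute)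
  qed
  have "(\<Sum>y\<in>?A. \<pi> y * a) \<le> (\<Sum>y\<in>?A. kpow \<mu> \<pi> n x y)" using key by (rule sum_mono)
  also have "\<dots> \<le> 1" using gball_finite by (rule kpow_sum_le)
  finally have "vol \<mu> \<pi> x (sqrt (real (2*n))) * a \<le> 1" by (simp add: vol_def sum_distrib_right)
  then have i1: "vol \<mu> \<pi> x (sqrt (real (2*n))) * c1 * exp (-(2/c2)) \<le> ?v"
    unfolding a_def using vpos by (simp add: field_simps)
  have e: "exp (-(2/c2)) * exp (2/c2) = 1" by (simp add: exp_add[symmetric])
  have "vol \<mu> \<pi> x (sqrt (real (2*n))) * c1 * exp (-(2/c2)) * exp (2/c2) \<le> ?v * exp (2/c2)"
    using i1 by (intro mult_right_mono) auto
  then have "vol \<mu> \<pi> x (sqrt (real (2*n))) * c1 \<le> ?v * exp (2/c2)"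
    using e by (simp add: mult.assoc)
  then show ?thesis using c1 by (simp add: field_simps)
qed

end

lemma iter_double:
  fixes f :: "nat \<Rightarrow> real"
  assumes step: "\<And>n. 2 \<le> n \<Longrightarrow> f (2*n) \<le> D * f n" and D: "0 \<le> D" and m: "2 \<le> m"
  shows "f (2^k * m) \<le> D^k * f m"
proof (induction k)
  case 0 show ?case by simp
next
  case (Suc k)
  have "1 \<le> (2::nat)^k" by simp
  then have "m \<le> 2^k * m" by simp
  then have m2: "2 \<le> 2^k * m" using m by linarith
  have "f (2^Suc k * m) = f (2 * (2^k*m))" by (simp add: mult.assoc)
  also have "\<dots> \<le> D * f (2^k*m)" using m2 by (rule step)
  also have "\<dots> \<le> D * (D^k * f m)" using Suc.IH D by (rule mult_left_mono)
  also have "\<dots> = D^Suc k * f m" by simp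
  finally show ?case .
qed

lemma exp_bound:
  fixes D c :: real
  assumes D: "1 \<le> D" and c: "0 < c"
  shows "\<exists>B. \<forall>k::nat. D^k * exp (-(2^k/(8*c))) \<le> B"
proof -
  obtain j :: nat where j: "D < 2^j" using real_arch_pow[of 2 D] by auto
  define J where "J = Suc j"
  have "(2::real)^j \<le> 2^J" unfolding J_def by simp
  then have DJ: "D \<le> 2^J" using j by linarith
  have J0: "real J > 0" unfolding J_def by simp
  define a where "a = 1/(8*c)"
  have a: "a > 0" using c by (simp add: a_def)
  define B where "B = (real J / a)^J"
  have B0: "B \<ge> 0" unfolding B_def using a J0 by simp
  show ?thesis
  proof (intro exI allI)
    fix k :: nat
    define t where "t = (2::real)^k"
    have t: "t > 0" by (simp add: t_def)
    have "exp (a*t) = exp (real J * (a*t/real J))" using J0 by simp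
    also have "\<dots> = exp (a*t/real J) ^ J" by (rule exp_of_nat_mult)
    finally have e1: "exp (a*t) = exp (a*t/real J) ^ J" .
    have e2: "a*t/real J \<le> exp (a*t/real J)" using exp_ge_add_one_self[of "a*t/real J"] by linarith
    have e3: "(a*t/real J)^J \<le> exp (a*t)" unfolding e1
      using e2 a t J0 by (intro power_mono) auto
    have "D^k \<le> (2^J)^k" using D DJ by (intro power_mono) auto
    also have "((2::real)^J)^k = t^J" unfolding t_def by (simp add: power_mult[symmetric] mult.commute)
    also have "t^J = B * (a*t/real J)^J"
    proof -
      have "B * (a*t/real J)^J = (real J / a * (a*t/real J))^J" unfolding B_def by (rule power_mult_distrib[symmetric])
      also have "real J / a * (a*t/real J) = t" using a J0 by (simp add: field_simps)
      finally show ?thesis by simp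
    qed
    also have "\<dots> \<le> B * exp (a*t)" using e3 B0 by (intro mult_left_mono)
    finally have DB: "D^k \<le> B * exp (a*t)" .
    have "2^k/(8*c) = a*t" unfolding a_def t_def by simp
    then have "D^k * exp (-(2^k/(8*c))) = D^k * exp (-(a*t))" by simp
    also have "\<dots> \<le> B * exp (a*t) * exp (-(a*t))" using DB by (intro mult_right_mono) auto
    also have "\<dots> = B" by (simp add: mult.assoc exp_add[symmetric])
    finally show "D^k * exp (-(2^k/(8*c))) \<le> B" .
  qed
qed

lemma short_term:
  fixes f :: "nat \<Rightarrow> real"
  assumes fpos: "\<And>n. f n > 0" and fmono: "\<And>m n. m \<le> n \<Longrightarrow> f m \<le> f n"
    and iter: "\<And>m k. 2 \<le> m \<Longrightarrow> f (2^k*m) \<le> D^k * f m"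
    and Bb: "\<And>k::nat. D^k * exp (-(2^k/(8*c))) \<le> B" and c: "c > 0"
    and m: "2 \<le> m" and mM: "m < M"
  shows "exp (- real M / (c * real m)) / f m \<le> B / f (4*M)"
proof -
  have ex: "\<exists>k. 4*M \<le> 2^k*m"
  proof
    have "4*M < 2^(4*M)" by (rule less_exp)
    also have "\<dots> \<le> 2^(4*M) * m" using m by simp
    finally show "4*M \<le> 2^(4*M)*m" by simp
  qed
  define k where "k = (LEAST k. 4*M \<le> 2^k*m)"
  have k1: "4*M \<le> 2^k*m" unfolding k_def by (rule LeastI_ex[OF ex])
  have k0: "k \<noteq> 0" using k1 mM by (cases k) auto
  have "\<not> 4*M \<le> 2^(k-1)*m" unfolding k_def
    by (rule not_less_Least) (use k0 k_def in simp)
  then have "2^(k-1)*m < 4*M" by (meson not_le)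
  then have "2 * (2^(k-1)*m) < 8*M" by linarith
  moreover have "2 * 2^(k-1) = (2::nat)^k" using k0 by (cases k) auto
  ultimately have k3: "2^k*m < 8*M" by (metis mult.assoc)
  have k4: "(2::real)^k * real m < 8 * real M"
  proof -
    have "real (2^k*m) < real (8*M)" using k3 by (simp only: of_nat_less_iff)
    then show ?thesis by simp
  qed
  have mpos: "real m > 0" using m by simp
  have "c * ((2::real)^k * real m) \<le> c * (8 * real M)" using k4 c by (intro mult_left_mono) auto
  then have "2^k/(8*c) \<le> real M/(c*real m)" using c mpos by (simp add: field_simps)
  then have e: "exp (- real M / (c * real m)) \<le> exp (-(2^k/(8*c)))" by simp
  have "f (4*M) \<le> f (2^k*m)" using k1 by (rule fmono)
  also have "\<dots> \<le> D^k * f m" using m by (rule iter)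
  finally have fD: "f (4*M) \<le> D^k * f m" .
  have "0 < D^k * f m" using fD fpos[of "4*M"] by linarith
  then have Dk: "D^k > 0" using fpos[of m] by (simp add: zero_less_mult_iff)
  have q: "1 / f m \<le> D^k / f (4*M)" using fD fpos[of m] fpos[of "4*M"] by (simp add: field_simps)
  have "exp (- real M / (c * real m)) / f m = exp (- real M / (c * real m)) * (1 / f m)" by simp
  also have "\<dots> \<le> exp (-(2^k/(8*c))) * (D^k / f (4*M))"
    using e q fpos[of m] by (intro mult_mono) auto
  also have "\<dots> = (D^k * exp (-(2^k/(8*c)))) / f (4*M)" by simp
  also have "\<dots> \<le> B / f (4*M)" using Bb[of k] fpos[of "4*M"] by (intro divide_right_mono) auto
  finally show ?thesis .
qed

lemma per_z:
  fixes f :: "nat \<Rightarrow> real"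
  assumes fpos: "\<And>n. f n > 0" and fmono: "\<And>m n. m \<le> n \<Longrightarrow> f m \<le> f n"
    and iter: "\<And>m k. 2 \<le> m \<Longrightarrow> f (2^k*m) \<le> D^k * f m"
    and Bb: "\<And>k::nat. D^k * exp (-(2^k/(8*c))) \<le> B" and c: "c > 0"
    and rho: "2 \<le> \<rho>" and N1: "n < N" and N2: "4*\<rho>^2 \<le> N"
  shows "(\<Sum>m\<le>n. if \<rho> \<le> m then exp (- (real \<rho>)\<^sup>2 / (c * real m)) / f m else 0)
         \<le> (1 + B/3) * (\<Sum>m<N. if \<rho>^2 \<le> m then 1 / f m else 0)"
proof -
  define M where "M = \<rho>^2"
  define R where "R = (\<Sum>m<N. if M \<le> m then 1 / f m else 0)"
  define E where "E = (\<lambda>m. exp (- (real \<rho>)\<^sup>2 / (c * real m)) / f m)"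
  have B0: "B \<ge> 0"
  proof -
    have b: "exp (-(2^0/(8*c))) \<le> B" using Bb[of 0] by simp
    show ?thesis using b exp_ge_zero[of "-(2^0/(8*c))"] by linarith
  qed
  have rM: "\<rho> \<le> M" unfolding M_def power2_eq_square using rho by simp
  have realM: "real M = (real \<rho>)\<^sup>2" unfolding M_def by simp
  have split: "(if \<rho> \<le> m then E m else 0) = (if \<rho> \<le> m \<and> m < M then E m else 0) + (if M \<le> m then E m else 0)" for m
    using rM by auto
  have p1a: "(if \<rho> \<le> m \<and> m < M then E m else 0) \<le> (if m < M then B / f (4*M) else 0)" for m
  proof (cases "\<rho> \<le> m \<and> m < M")
    case True
    then have "E m \<le> B / f (4*M)" unfolding E_def realM[symmetric]
      using short_term[OF fpos fmono iter Bb c, of m M] rho by auto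
    then show ?thesis using True by simp
  next
    case False
    then show ?thesis using B0 fpos[of "4*M"] by auto
  qed
  have "(\<Sum>m\<le>n. if \<rho> \<le> m \<and> m < M then E m else 0) \<le> (\<Sum>m\<le>n. if m < M then B / f (4*M) else 0)"
    by (rule sum_mono) (rule p1a)
  also have "\<dots> = (\<Sum>m\<in>{m\<in>{..n}. m < M}. B / f (4*M))"
    by (subst sum.inter_filter) simp_all
  also have "\<dots> = real (card {m\<in>{..n}. m < M}) * (B / f (4*M))" by simp
  also have "\<dots> \<le> real M * (B / f (4*M))"
  proof (rule mult_right_mono)
    have "card {m\<in>{..n}. m < M} \<le> card {..<M}" by (rule card_mono) auto
    then show "real (card {m\<in>{..n}. m < M}) \<le> real M" by simp
    show "0 \<le> B / f (4*M)" using B0 fpos[of "4*M"] by simp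
  qed
  finally have p1: "(\<Sum>m\<le>n. if \<rho> \<le> m \<and> m < M then E m else 0) \<le> real M * (B / f (4*M))" .
  have "(\<Sum>m\<in>{M..<4*M}. 1 / f (4*M)) \<le> (\<Sum>m\<in>{M..<4*M}. 1 / f m)"
  proof (rule sum_mono)
    fix m assume "m \<in> {M..<4*M}"
    then have "f m \<le> f (4*M)" by (intro fmono) auto
    then show "1 / f (4*M) \<le> 1 / f m" using fpos[of m] by (intro divide_left_mono) auto
  qed
  also have "\<dots> = (\<Sum>m\<in>{M..<4*M}. if M \<le> m then 1 / f m else 0)" by (rule sum.cong) auto
  also have "\<dots> \<le> R" unfolding R_def
  proof (rule sum_mono2)
    show "finite {..<N}" by simp
    show "{M..<4*M} \<subseteq> {..<N}" using N2 unfolding M_def by auto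
    show "0 \<le> (if M \<le> b then 1 / f b else 0)" if "b \<in> {..<N} - {M..<4*M}" for b using fpos less_imp_le by auto
  qed
  finally have "real (3*M) * (1 / f (4*M)) \<le> R" by simp
  then have "real M * (B / f (4*M)) \<le> B/3 * R" using B0
  proof -
    assume h: "real (3*M) * (1 / f (4*M)) \<le> R"
    have "real M * (B / f (4*M)) = B/3 * (real (3*M) * (1 / f (4*M)))" by simp
    also have "\<dots> \<le> B/3 * R" using h B0 by (intro mult_left_mono) auto
    finally show ?thesis .
  qed
  with p1 have P1: "(\<Sum>m\<le>n. if \<rho> \<le> m \<and> m < M then E m else 0) \<le> B/3 * R" by linarith
  have "(\<Sum>m\<le>n. if M \<le> m then E m else 0) \<le> (\<Sum>m\<le>n. if M \<le> m then 1 / f m else 0)"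
  proof (rule sum_mono)
    fix m
    have "- (real \<rho>)\<^sup>2 / (c * real m) \<le> 0" using c by (intro divide_nonpos_nonneg) auto
    then have "exp (- (real \<rho>)\<^sup>2 / (c * real m)) \<le> 1" by simp
    then have "E m \<le> 1 / f m" unfolding E_def using fpos[of m] by (intro divide_right_mono) auto
    then show "(if M \<le> m then E m else 0) \<le> (if M \<le> m then 1 / f m else 0)" by simp
  qed
  also have "\<dots> \<le> R" unfolding R_def
  proof (rule sum_mono2)
    show "finite {..<N}" by simp
    show "{..n} \<subseteq> {..<N}" using N1 by auto
    show "0 \<le> (if M \<le> b then 1 / f b else 0)" if "b \<in> {..<N} - {..n}" for b using fpos less_imp_le by auto
  qed
  finally have P2: "(\<Sum>m\<le>n. if M \<le> m then E m else 0) \<le> R" .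
  have "(\<Sum>m\<le>n. if \<rho> \<le> m then E m else 0)
      = (\<Sum>m\<le>n. if \<rho> \<le> m \<and> m < M then E m else 0) + (\<Sum>m\<le>n. if M \<le> m then E m else 0)"
    by (simp only: split sum.distrib)
  also have "\<dots> \<le> B/3 * R + R" using P1 P2 by linarith
  also have "\<dots> = (1 + B/3) * R" by (simp add: algebra_simps)
  finally show ?thesis unfolding E_def R_def M_def .
qed


theorem theorem2p9:
  fixes \<mu> :: "'a \<Rightarrow> 'a \<Rightarrow> real" and \<pi> :: "'a \<Rightarrow> real" and K :: "'a set"
  assumes "weighted_graph \<mu> \<pi>" and "harnack \<mu> \<pi>"
    and "controlled \<mu> \<pi>" and "uniformly_lazy \<mu> \<pi>"
  shows "\<exists>C. \<forall>x. x \<notin> K \<and> x \<notin> inner_boundary \<mu> K \<longrightarrow>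
           ennreal (hitting_prob \<mu> \<pi> K x)
             \<le> (\<Sum>n. if (real (set_dist \<mu> x K))\<^sup>2 \<le> real n
                     then ennreal (C * bvol \<mu> \<pi> K x (sqrt (real n)) / vol \<mu> \<pi> x (sqrt (real n)))
                     else 0)"
proof -
  from assms(2) obtain c1 c2 c3 c4 where c: "c1 > 0" "c2 > 0" "c3 > 0" "c4 > 0"
    and H: "\<forall>x y n. gdist \<mu> x y \<le> n \<longrightarrow>
        c1 / vol \<mu> \<pi> x (sqrt (real n)) * exp (- (real (gdist \<mu> x y))\<^sup>2 / (c2 * real n))
          \<le> heat_kernel \<mu> \<pi> n x y \<and>
        heat_kernel \<mu> \<pi> n x y
          \<le> c3 / vol \<mu> \<pi> x (sqrt (real n)) * exp (- (real (gdist \<mu> x y))\<^sup>2 / (c4 * real n))"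
    unfolding harnack_def by blast
  interpret wg \<mu> \<pi> using assms(1,3,4) by unfold_locales
  define D where "D = max 1 (exp (2/c2) / c1)"
  have D1: "1 \<le> D" by (simp add: D_def)
  obtain B where Bb: "\<And>k::nat. D^k * exp (-(2^k/(8*c4))) \<le> B"
    using exp_bound[OF D1 c(4)] by blast
  have B0: "B \<ge> 0"
  proof -
    have b: "exp (-(2^0/(8*c4))) \<le> B" using Bb[of 0] by simp
    show ?thesis using b exp_ge_zero[of "-(2^0/(8*c4))"] by linarith
  qed
  define C where "C = c3 * (1 + B/3)"
  have C0: "C \<ge> 0" unfolding C_def using c(3) B0 by simp
  show ?thesis
  proof (intro exI[of _ C] allI impI)
    fix x assume x: "x \<notin> K \<and> x \<notin> inner_boundary \<mu> K"
    let ?S = "outer_boundary \<mu> K"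
    define f where "f = (\<lambda>n::nat. vol \<mu> \<pi> x (sqrt (real n)))"
    define d where "d = set_dist \<mu> x K"
    define T where "T = (\<lambda>n::nat. if (real d)\<^sup>2 \<le> real n
                     then ennreal (C * bvol \<mu> \<pi> K x (sqrt (real n)) / vol \<mu> \<pi> x (sqrt (real n)))
                     else 0)"
    define t where "t = (\<lambda>n::nat. if (real d)\<^sup>2 \<le> real n
                     then C * bvol \<mu> \<pi> K x (sqrt (real n)) / f n else 0)"
    have fpos: "\<And>n. f n > 0" unfolding f_def by (rule vol_pos) simp
    have fmono: "\<And>m n. m \<le> n \<Longrightarrow> f m \<le> f n" unfolding f_def by (rule vol_mono) simp
    have dstep: "f (2*n) \<le> D * f n" if n: "2 \<le> n" for n
    proof -
      have "f (2*n) \<le> exp (2/c2) / c1 * f n" unfolding f_def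
        by (rule doubling[OF c(1) c(2) _ n]) (use H in blast)
      also have "\<dots> \<le> D * f n" using fpos[of n] by (intro mult_right_mono) (auto simp: D_def)
      finally show ?thesis .
    qed
    have D0: "0 \<le> D" using D1 by simp
    have iter: "f (2^k*m) \<le> D^k * f m" if m: "2 \<le> m" for m k
      by (rule iter_double[where f=f and D=D, OF _ D0 m]) (simp add: dstep)
    have rho2: "2 \<le> gdist \<mu> x z" if z: "z \<in> ?S" for z
    proof -
      have zK: "z \<in> K" using z by (simp add: outer_boundary_def)
      have "gdist \<mu> x z \<noteq> 0" using gdist_zero[of x z] zK x by auto
      moreover have "gdist \<mu> x z \<noteq> 1" using gdist_one[of x z] zK x by (auto simp: inner_boundary_def)
      ultimately show ?thesis by linarith
    qed
    have dle: "d \<le> gdist \<mu> x z" if "z \<in> K" for z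
      unfolding d_def set_dist_def by (rule cINF_lower) (simp_all add: that)
    have tnn: "t m \<ge> 0" for m
    proof -
      have "bvol \<mu> \<pi> K x (sqrt (real m)) \<ge> 0" unfolding bvol_def
        by (rule sum_nonneg) (simp add: less_imp_le pi_pos)
      then show ?thesis unfolding t_def using C0 fpos[of m] by simp
    qed
    have Tt: "T m = ennreal (t m)" for m unfolding T_def t_def f_def by simp
    have main: "ennreal (hitting_prob \<mu> \<pi> K x) \<le> (\<Sum>n. T n)"
    proof (cases "(\<Sum>n. T n) = top")
      case True then show ?thesis by simp
    next
      case False
      then obtain r where r: "(\<Sum>n. T n) = ennreal r" "0 \<le> r"
        by (cases "(\<Sum>n. T n)") auto
      have hb: "hit_within \<mu> \<pi> K n x \<le> r" for n
      proof -
        define Z where "Z = ?S \<inter> gball \<mu> x (real n)"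
        define N where "N = n + 4*n^2 + 1"
        have nN: "n < N" unfolding N_def by simp
        have finZ: "finite Z" unfolding Z_def using gball_finite by blast
        define h where "h = (\<lambda>z m. if gdist \<mu> x z \<le> m
              then exp (- (real (gdist \<mu> x z))\<^sup>2 / (c4 * real m)) / f m else 0)"
        have s2: "Gm K m x \<le> (\<Sum>z\<in>Z. c3 * \<pi> z * h z m)" if m: "m \<le> n" for m
        proof -
          have seteq: "?S \<inter> gball \<mu> x (real m) = {z\<in>Z. gdist \<mu> x z \<le> m}"
            using m by (auto simp: Z_def gball_def)
          have "Gm K m x = (\<Sum>z\<in>{z\<in>Z. gdist \<mu> x z \<le> m}. kpow \<mu> \<pi> m x z)"
            unfolding Gm_def seteq ..
          also have "\<dots> = (\<Sum>z\<in>Z. if gdist \<mu> x z \<le> m then kpow \<mu> \<pi> m x z else 0)"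
            by (rule sum.inter_filter[OF finZ])
          also have "\<dots> \<le> (\<Sum>z\<in>Z. c3 * \<pi> z * h z m)"
          proof (rule sum_mono)
            fix z assume "z \<in> Z"
            show "(if gdist \<mu> x z \<le> m then kpow \<mu> \<pi> m x z else 0) \<le> c3 * \<pi> z * h z m"
            proof (cases "gdist \<mu> x z \<le> m")
              case True
              have hk: "heat_kernel \<mu> \<pi> m x z \<le> c3 / f m * exp (- (real (gdist \<mu> x z))\<^sup>2 / (c4 * real m))"
                using H True unfolding f_def by blast
              have "kpow \<mu> \<pi> m x z = \<pi> z * heat_kernel \<mu> \<pi> m x z"
                using pi_pos[of z] unfolding heat_kernel_def by simp
              also have "\<dots> \<le> \<pi> z * (c3 / f m * exp (- (real (gdist \<mu> x z))\<^sup>2 / (c4 * real m)))"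
                using hk pi_pos[of z] by (intro mult_left_mono) auto
              also have "\<dots> = c3 * \<pi> z * h z m" unfolding h_def using True by simp
              finally show ?thesis using True by simp
            next
              case False
              then show ?thesis unfolding h_def by simp
            qed
          qed
          finally show ?thesis .
        qed
        have "hit_within \<mu> \<pi> K n x \<le> (\<Sum>m\<le>n. Gm K m x)" using hit_le x by blast
        also have "\<dots> \<le> (\<Sum>m\<le>n. \<Sum>z\<in>Z. c3 * \<pi> z * h z m)"
          by (rule sum_mono) (rule s2, simp)
        also have "\<dots> = (\<Sum>z\<in>Z. \<Sum>m\<le>n. c3 * \<pi> z * h z m)" by (rule sum.swap)
        also have "\<dots> = (\<Sum>z\<in>Z. c3 * \<pi> z * (\<Sum>m\<le>n. h z m))" by (simp add: sum_distrib_left)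
        also have "\<dots> \<le> (\<Sum>z\<in>Z. c3 * \<pi> z * ((1 + B/3) *
              (\<Sum>m<N. if (gdist \<mu> x z)^2 \<le> m then 1 / f m else 0)))"
        proof (rule sum_mono)
          fix z assume z: "z \<in> Z"
          have zS: "z \<in> ?S" and zn: "gdist \<mu> x z \<le> n" using z by (auto simp: Z_def gball_def)
          have sq: "(gdist \<mu> x z)^2 \<le> n^2" using zn by (rule power_mono) simp
          have N2: "4 * (gdist \<mu> x z)^2 \<le> N" unfolding N_def using sq by linarith
          have "(\<Sum>m\<le>n. h z m) \<le> (1 + B/3) * (\<Sum>m<N. if (gdist \<mu> x z)^2 \<le> m then 1 / f m else 0)"
            unfolding h_def
            by (rule per_z[OF fpos fmono iter Bb c(4) rho2[OF zS] nN N2])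
          then show "c3 * \<pi> z * (\<Sum>m\<le>n. h z m) \<le> c3 * \<pi> z * ((1 + B/3) *
              (\<Sum>m<N. if (gdist \<mu> x z)^2 \<le> m then 1 / f m else 0))"
            using c(3) pi_pos[of z] by (intro mult_left_mono) auto
        qed
        also have "\<dots> = (\<Sum>z\<in>Z. \<Sum>m<N. C * \<pi> z * (if (gdist \<mu> x z)^2 \<le> m then 1 / f m else 0))"
          by (simp add: C_def sum_distrib_left mult_ac)
        also have "\<dots> = (\<Sum>m<N. \<Sum>z\<in>Z. C * \<pi> z * (if (gdist \<mu> x z)^2 \<le> m then 1 / f m else 0))"
          by (rule sum.swap)
        also have "\<dots> \<le> (\<Sum>m<N. t m)"
        proof (rule sum_mono)
          fix m
          show "(\<Sum>z\<in>Z. C * \<pi> z * (if (gdist \<mu> x z)^2 \<le> m then 1 / f m else 0)) \<le> t m"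
          proof (cases "(real d)\<^sup>2 \<le> real m")
            case True
            have mo: "C / f m * a \<le> C / f m * b" if "a \<le> b" for a b
              using C0 fpos[of m] that by (intro mult_left_mono) auto
            have "(\<Sum>z\<in>Z. C * \<pi> z * (if (gdist \<mu> x z)^2 \<le> m then 1 / f m else 0))
                = C / f m * (\<Sum>z\<in>Z. if (gdist \<mu> x z)^2 \<le> m then \<pi> z else 0)"
              by (simp add: sum_distrib_left if_distrib cong: if_cong)
            also have "(\<Sum>z\<in>Z. if (gdist \<mu> x z)^2 \<le> m then \<pi> z else 0)
                = (\<Sum>z\<in>{z\<in>Z. (gdist \<mu> x z)^2 \<le> m}. \<pi> z)"
              by (rule sum.inter_filter[OF finZ, symmetric])
            also have "\<dots> \<le> bvol \<mu> \<pi> K x (sqrt (real m))" unfolding bvol_def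
            proof (rule sum_mono2)
              show "finite (gball \<mu> x (sqrt (real m)) \<inter> ?S)" using gball_finite by blast
              show "{z\<in>Z. (gdist \<mu> x z)^2 \<le> m} \<subseteq> gball \<mu> x (sqrt (real m)) \<inter> ?S"
              proof
                fix z assume z: "z \<in> {z\<in>Z. (gdist \<mu> x z)^2 \<le> m}"
                then have "(real (gdist \<mu> x z))\<^sup>2 \<le> real m"
                  by (metis (mono_tags, lifting) mem_Collect_eq of_nat_le_iff of_nat_power)
                then have "real (gdist \<mu> x z) \<le> sqrt (real m)" by (rule real_le_rsqrt)
                then show "z \<in> gball \<mu> x (sqrt (real m)) \<inter> ?S" using z by (auto simp: gball_def Z_def)
              qed
              show "0 \<le> \<pi> b" if "b \<in> gball \<mu> x (sqrt (real m)) \<inter> ?S - {z\<in>Z. (gdist \<mu> x z)^2 \<le> m}" for b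
                using pi_pos less_imp_le by blast
            qed
            finally have "(\<Sum>z\<in>Z. C * \<pi> z * (if (gdist \<mu> x z)^2 \<le> m then 1 / f m else 0))
                \<le> C / f m * bvol \<mu> \<pi> K x (sqrt (real m))"
              using mo by blast
            then show ?thesis unfolding t_def using True by simp
          next
            case False
            have "(\<Sum>z\<in>Z. C * \<pi> z * (if (gdist \<mu> x z)^2 \<le> m then 1 / f m else 0)) = 0"
            proof (rule sum.neutral, rule ballI)
              fix z assume z: "z \<in> Z"
              then have "z \<in> K" by (simp add: Z_def outer_boundary_def)
              then have "d \<le> gdist \<mu> x z" by (rule dle)
              then have "(real d)\<^sup>2 \<le> (real (gdist \<mu> x z))\<^sup>2" by (intro power_mono) auto
              then have "\<not> (gdist \<mu> x z)^2 \<le> m" using False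
                by (metis (mono_tags, opaque_lifting) of_nat_le_iff of_nat_power order_trans)
              then show "C * \<pi> z * (if (gdist \<mu> x z)^2 \<le> m then 1 / f m else 0) = 0" by simp
            qed
            then show ?thesis using tnn[of m] by simp
          qed
        qed
        also have "\<dots> \<le> r"
        proof -
          have "ennreal (\<Sum>m<N. t m) = (\<Sum>m<N. ennreal (t m))"
            by (rule sum_ennreal[symmetric]) (rule tnn)
          also have "\<dots> = (\<Sum>m<N. T m)" by (simp add: Tt)
          also have "\<dots> \<le> (\<Sum>n. T n)" by (rule sum_le_suminf) auto
          finally show ?thesis using r by simp
        qed
        finally show ?thesis .
      qed
      then have "hitting_prob \<mu> \<pi> K x \<le> r" unfolding hitting_prob_def
        by (intro cSUP_least) auto
      then show ?thesis using r by (simp add: ennreal_leI)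
    qed
    then show "ennreal (hitting_prob \<mu> \<pi> K x)
             \<le> (\<Sum>n. if (real (set_dist \<mu> x K))\<^sup>2 \<le> real n
                     then ennreal (C * bvol \<mu> \<pi> K x (sqrt (real n)) / vol \<mu> \<pi> x (sqrt (real n)))
                     else 0)" unfolding T_def d_def .
  qed
qed

end
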